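(* For every regular language $L\subseteq\Sigma^*$, the map \[\mathrm{dr}_L\colon [\mathrm{LQ}(L^r)]^{\mathsf{op}}\to\mathrm{LQ}(L),\qquad K\mapsto \big(\overline{K^r}\big)^{-1}L,\] is a well-defined isomorphism of $\mathbf{JSL}$-dfas; i.e., the minimal $\mathbf{JSL}$-dfas of $L$ and $L^r$ are dual to each other.
   Context: For $u\in\Sigma^*$, $u^{-1}L=\{w:uw\in L\}$; for $U\subseteq\Sigma^*$, $U^{-1}L=\bigcup_{u\in U}u^{-1}L$. $\overline{K}=\Sigma^*\setminus K$, $K^r=\{w^r:w\in K\}$ where $w^r$ is the reversal of $w$. $\mathrm{LQ}(L)$ is the $\mathbf{JSL}$-dfa whose states are all finite unions (including $\emptyset$) of left derivatives $u^{-1}L$, ordered by inclusion, with transitions $K\mapsto a^{-1}K$, initial state $L$, and final states those $K$ with $\epsilon\in K$. A $\mathbf{JSL}$-dfa is a finite semilattice $S$ with join-preserving transitions $\delta_a$, an initial state $s_0$, and final states $F=\{s:s\not\le s_f\}$ for some $s_f$; morphisms are join-preserving maps preserving transitions, initial state and final states (both ways). The dual $A^{\mathsf{op}}$ has states $S$ with reversed order, transitions $\delta_a^*(s)=$ largest $t$ with $\delta_a(t)\le s$, initial state the largest non-final state of $A$, final states $\{s: s_0\not\le s\}$. *)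

theory Defs
  imports Main
begin

definition lquot :: "'a list \<Rightarrow> 'a list set \<Rightarrow> 'a list set" where
  "lquot u L = {w. u @ w \<in> L}"

definition regular :: "'a list set \<Rightarrow> bool" where
  "regular L \<longleftrightarrow> (\<exists>(Q :: nat set) q0 (\<delta> :: 'a \<Rightarrow> nat \<Rightarrow> nat) F.
      finite Q \<and> q0 \<in> Q \<and> (\<forall>a q. q \<in> Q \<longrightarrow> \<delta> a q \<in> Q) \<and> F \<subseteq> Q \<and>
      L = {w. foldl (\<lambda>q a. \<delta> a q) q0 w \<in> F})"

record ('s, 'a) jdfa =
  states :: "'s set"
  le :: "'s \<Rightarrow> 's \<Rightarrow> bool"
  trans :: "'a \<Rightarrow> 's \<Rightarrow> 's"
  init :: 's
  fin :: "'s set"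

definition is_lub :: "('s \<Rightarrow> 's \<Rightarrow> bool) \<Rightarrow> 's set \<Rightarrow> 's set \<Rightarrow> 's \<Rightarrow> bool" where
  "is_lub r S X x \<longleftrightarrow> x \<in> S \<and> (\<forall>y\<in>X. r y x) \<and> (\<forall>z\<in>S. (\<forall>y\<in>X. r y z) \<longrightarrow> r x z)"

definition join :: "('s \<Rightarrow> 's \<Rightarrow> bool) \<Rightarrow> 's set \<Rightarrow> 's set \<Rightarrow> 's" where
  "join r S X = (THE x. is_lub r S X x)"

text \<open>A finite join-semilattice (with bottom = join of the empty set).\<close>
definition finite_jsl :: "'s set \<Rightarrow> ('s \<Rightarrow> 's \<Rightarrow> bool) \<Rightarrow> bool" where
  "finite_jsl S r \<longleftrightarrow> finite S \<and>
     (\<forall>x\<in>S. r x x) \<and>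
     (\<forall>x\<in>S. \<forall>y\<in>S. r x y \<and> r y x \<longrightarrow> x = y) \<and>
     (\<forall>x\<in>S. \<forall>y\<in>S. \<forall>z\<in>S. r x y \<and> r y z \<longrightarrow> r x z) \<and>
     (\<forall>X. X \<subseteq> S \<longrightarrow> finite X \<longrightarrow> (\<exists>x. is_lub r S X x))"

definition join_preserving ::
  "'s set \<Rightarrow> ('s \<Rightarrow> 's \<Rightarrow> bool) \<Rightarrow> 't set \<Rightarrow> ('t \<Rightarrow> 't \<Rightarrow> bool) \<Rightarrow> ('s \<Rightarrow> 't) \<Rightarrow> bool" where
  "join_preserving S r T q f \<longleftrightarrow> (\<forall>x\<in>S. f x \<in> T) \<and>
     (\<forall>X. X \<subseteq> S \<longrightarrow> finite X \<longrightarrow> f (join r S X) = join q T (f ` X))"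

definition jsl_dfa :: "('s, 'a) jdfa \<Rightarrow> bool" where
  "jsl_dfa A \<longleftrightarrow> finite_jsl (states A) (le A) \<and>
     (\<forall>a. join_preserving (states A) (le A) (states A) (le A) (trans A a)) \<and>
     init A \<in> states A \<and>
     (\<exists>sf\<in>states A. fin A = {s \<in> states A. \<not> le A s sf})"

definition jsl_dfa_morphism :: "('s, 'a) jdfa \<Rightarrow> ('t, 'a) jdfa \<Rightarrow> ('s \<Rightarrow> 't) \<Rightarrow> bool" where
  "jsl_dfa_morphism A B f \<longleftrightarrow>
     join_preserving (states A) (le A) (states B) (le B) f \<and>
     (\<forall>a. \<forall>s\<in>states A. f (trans A a s) = trans B a (f s)) \<and>
     f (init A) = init B \<and>
     (\<forall>s\<in>states A. f s \<in> fin B \<longleftrightarrow> s \<in> fin A)"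

definition jsl_dfa_iso :: "('s, 'a) jdfa \<Rightarrow> ('t, 'a) jdfa \<Rightarrow> ('s \<Rightarrow> 't) \<Rightarrow> bool" where
  "jsl_dfa_iso A B f \<longleftrightarrow> jsl_dfa_morphism A B f \<and> bij_betw f (states A) (states B) \<and>
     jsl_dfa_morphism B A (the_inv_into (states A) f)"

definition dual :: "('s, 'a) jdfa \<Rightarrow> ('s, 'a) jdfa" where
  "dual A = \<lparr> states = states A,
     le = (\<lambda>x y. le A y x),
     trans = (\<lambda>a s. THE t. t \<in> states A \<and> le A (trans A a t) s \<and>
                         (\<forall>t'\<in>states A. le A (trans A a t') s \<longrightarrow> le A t' t)),
     init = (THE s. s \<in> states A \<and> s \<notin> fin A \<and>
                    (\<forall>t\<in>states A. t \<notin> fin A \<longrightarrow> le A t s)),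
     fin = {s \<in> states A. \<not> le A (init A) s} \<rparr>"

definition LQ :: "'a list set \<Rightarrow> ('a list set, 'a) jdfa" where
  "LQ L = \<lparr> states = {\<Union>D | D. finite D \<and> D \<subseteq> {lquot u L | u. True}},
     le = (\<subseteq>),
     trans = (\<lambda>a K. lquot [a] K),
     init = L,
     fin = {K \<in> {\<Union>D | D. finite D \<and> D \<subseteq> {lquot u L | u. True}}. [] \<in> K} \<rparr>"

definition lquot_set :: "'a list set \<Rightarrow> 'a list set \<Rightarrow> 'a list set" where
  "lquot_set U L = (\<Union>u\<in>U. lquot u L)"

definition dr :: "'a list set \<Rightarrow> 'a list set \<Rightarrow> 'a list set" where
  "dr L K = lquot_set (- (rev ` K)) L"

end

theory Submission
  imports Defs
begin


lemma fj_parts: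
  assumes "finite_jsl S r"
  shows "finite S" "x \<in> S \<Longrightarrow> r x x"
    "x \<in> S \<Longrightarrow> y \<in> S \<Longrightarrow> r x y \<Longrightarrow> r y x \<Longrightarrow> x = y"
    "x \<in> S \<Longrightarrow> y \<in> S \<Longrightarrow> z \<in> S \<Longrightarrow> r x y \<Longrightarrow> r y z \<Longrightarrow> r x z"
    "X \<subseteq> S \<Longrightarrow> finite X \<Longrightarrow> \<exists>x. is_lub r S X x"
proof -
  have A0: "finite S \<and> (\<forall>x\<in>S. r x x) \<and> (\<forall>x\<in>S. \<forall>y\<in>S. r x y \<and> r y x \<longrightarrow> x = y) \<and>
    (\<forall>x\<in>S. \<forall>y\<in>S. \<forall>z\<in>S. r x y \<and> r y z \<longrightarrow> r x z) \<and>
    (\<forall>X. X \<subseteq> S \<longrightarrow> finite X \<longrightarrow> (\<exists>x. is_lub r S X x))"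
    using assms unfolding finite_jsl_def .
  note A = A0[THEN conjunct1] A0[THEN conjunct2, THEN conjunct1]
    A0[THEN conjunct2, THEN conjunct2, THEN conjunct1]
    A0[THEN conjunct2, THEN conjunct2, THEN conjunct2, THEN conjunct1]
    A0[THEN conjunct2, THEN conjunct2, THEN conjunct2, THEN conjunct2]
  show "finite S" by (rule A(1))
  show "x \<in> S \<Longrightarrow> r x x" using A(2) by blast
  show "x \<in> S \<Longrightarrow> y \<in> S \<Longrightarrow> r x y \<Longrightarrow> r y x \<Longrightarrow> x = y" using A(3) by blast
  show "x \<in> S \<Longrightarrow> y \<in> S \<Longrightarrow> z \<in> S \<Longrightarrow> r x y \<Longrightarrow> r y z \<Longrightarrow> r x z" using A(4) by blast
  show "X \<subseteq> S \<Longrightarrow> finite X \<Longrightarrow> \<exists>x. is_lub r S X x" using A(5) by blast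
qed

lemma join_eq:
  assumes "finite_jsl S r" "is_lub r S X x" shows "join r S X = x"
  unfolding join_def
proof (rule the_equality)
  show "is_lub r S X x" by fact
  fix y assume y: "is_lub r S X y"
  have as: "\<forall>x\<in>S. \<forall>y\<in>S. r x y \<and> r y x \<longrightarrow> x = y" using fj_parts(3)[OF assms(1)] by blast
  have "y \<in> S" "x \<in> S" "r y x" "r x y" using y assms(2) unfolding is_lub_def by auto
  then show "y = x" using as by blast
qed

lemma iso_lub:
  assumes bij: "bij_betw f S T" and iso: "\<forall>x\<in>S. \<forall>y\<in>S. r x y \<longleftrightarrow> q (f x) (f y)"
    and X: "X \<subseteq> S" and x: "x \<in> S"
  shows "is_lub q T (f`X) (f x) \<longleftrightarrow> is_lub r S X x"
proof -
  have T: "T = f`S" using bij by (simp add: bij_betw_def)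
  have a: "(\<forall>y\<in>f`X. q y (f x)) \<longleftrightarrow> (\<forall>y\<in>X. r y x)" using X x iso by blast
  have b: "(\<forall>z\<in>f`S. (\<forall>y\<in>f`X. q y z) \<longrightarrow> q (f x) z) \<longleftrightarrow> (\<forall>z\<in>S. (\<forall>y\<in>X. r y z) \<longrightarrow> r x z)"
  proof
    assume H: "\<forall>z\<in>f`S. (\<forall>y\<in>f`X. q y z) \<longrightarrow> q (f x) z"
    show "\<forall>z\<in>S. (\<forall>y\<in>X. r y z) \<longrightarrow> r x z"
    proof (intro ballI impI)
      fix z assume z: "z \<in> S" "\<forall>y\<in>X. r y z"
      then have "\<forall>y\<in>f`X. q y (f z)" using X iso by blast
      then have "q (f x) (f z)" using H z by blast
      then show "r x z" using iso x z by blast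
    qed
  next
    assume H: "\<forall>z\<in>S. (\<forall>y\<in>X. r y z) \<longrightarrow> r x z"
    show "\<forall>z\<in>f`S. (\<forall>y\<in>f`X. q y z) \<longrightarrow> q (f x) z"
    proof (intro ballI impI)
      fix z' assume "z' \<in> f`S" and z': "\<forall>y\<in>f`X. q y z'"
      then obtain z where z: "z \<in> S" "z' = f z" by blast
      then have "\<forall>y\<in>X. r y z" using X iso z' by blast
      then have "r x z" using H z by blast
      then show "q (f x) z'" using iso x z by blast
    qed
  qed
  have c: "f x \<in> f`S" using x by blast
  show ?thesis unfolding is_lub_def T using a b c x by (simp only:)
qed

lemma transport:
  assumes bij: "bij_betw f S T" and iso: "\<forall>x\<in>S. \<forall>y\<in>S. r x y \<longleftrightarrow> q (f x) (f y)"
    and J: "finite_jsl T q"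
  shows "finite_jsl S r" "join_preserving S r T q f"
proof -
  have inj: "inj_on f S" and T: "T = f`S" using bij by (auto simp: bij_betw_def)
  have fS: "finite S" using bij fj_parts(1)[OF J] bij_betw_finite by blast
  have lub: "\<exists>x. is_lub r S X x" if "X \<subseteq> S" "finite X" for X
  proof -
    have "f`X \<subseteq> T" "finite (f`X)" using that T by auto
    then obtain z where z: "is_lub q T (f`X) z" using fj_parts(5)[OF J] by blast
    then have "z \<in> f ` S" unfolding is_lub_def T by blast
    then obtain x where x: "x \<in> S" "z = f x" by blast
    with iso_lub[OF bij iso that(1) x(1)] z show ?thesis by blast
  qed
  show J2: "finite_jsl S r" unfolding finite_jsl_def
  proof (intro conjI ballI allI impI)
    show "finite S" by fact
    fix x assume x: "x \<in> S"
    have fx: "f x \<in> T" using x T by blast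
    then show "r x x" using iso fj_parts(2)[OF J fx] x by blast
    fix y assume y: "y \<in> S"
    have fy: "f y \<in> T" using y T by blast
    { assume "r x y \<and> r y x"
      then have "f x = f y" using iso x y fj_parts(3)[OF J fx fy] by blast
      then show "x = y" using inj x y by (meson inj_on_def) }
    fix z assume z: "z \<in> S" "r x y \<and> r y z"
    have fz: "f z \<in> T" using z T by blast
    show "r x z" using iso x y z fj_parts(4)[OF J fx fy fz] by blast
  next
    fix X :: "'a set" assume "X \<subseteq> S" "finite X" then show "\<exists>x. is_lub r S X x" by (rule lub)
  qed
  show "join_preserving S r T q f" unfolding join_preserving_def
  proof (intro conjI ballI allI impI)
    fix x assume "x \<in> S" then show "f x \<in> T" using T by blast
  next
    fix X assume X: "X \<subseteq> S" "finite X"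
    then obtain x where x: "is_lub r S X x" using lub by blast
    then have xS: "x \<in> S" unfolding is_lub_def by blast
    have "join r S X = x" using join_eq[OF J2 x] .
    moreover have "is_lub q T (f`X) (f x)" using iso_lub[OF bij iso X(1) xS] x by blast
    then have "join q T (f`X) = f x" using join_eq[OF J] by blast
    ultimately show "f (join r S X) = join q T (f ` X)" by simp
  qed
qed

lemma inv_iso:
  assumes bij: "bij_betw f S T" and iso: "\<forall>x\<in>S. \<forall>y\<in>S. r x y \<longleftrightarrow> q (f x) (f y)"
  shows "bij_betw (the_inv_into S f) T S"
    "\<forall>x\<in>T. \<forall>y\<in>T. q x y \<longleftrightarrow> r (the_inv_into S f x) (the_inv_into S f y)"
proof -
  show b: "bij_betw (the_inv_into S f) T S" using bij by (rule bij_betw_the_inv_into)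
  have "\<And>y. y \<in> T \<Longrightarrow> f (the_inv_into S f y) = y \<and> the_inv_into S f y \<in> S"
    using bij b by (meson bij_betwE f_the_inv_into_f_bij_betw)
  then show "\<forall>x\<in>T. \<forall>y\<in>T. q x y \<longleftrightarrow> r (the_inv_into S f x) (the_inv_into S f y)"
    using iso by metis
qed

lemma jp_comp:
  assumes "join_preserving S r T q f" "join_preserving T q U p h"
  shows "join_preserving S r U p (h \<circ> f)"
  unfolding join_preserving_def
proof (intro conjI ballI allI impI)
  fix x assume "x \<in> S" then show "(h \<circ> f) x \<in> U" using assms unfolding join_preserving_def by auto
next
  fix X assume X: "X \<subseteq> S" "finite X"
  have "f ` X \<subseteq> T" "finite (f ` X)" using X assms unfolding join_preserving_def by auto
  then show "(h \<circ> f) (join r S X) = join p U ((h \<circ> f) ` X)"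
    using X assms unfolding join_preserving_def by (simp add: image_comp)
qed

lemma jp_cong:
  assumes "join_preserving S r T q f" "finite_jsl S r" "\<forall>x\<in>S. f x = h x"
  shows "join_preserving S r T q h"
  unfolding join_preserving_def
proof (intro conjI ballI allI impI)
  fix x assume "x \<in> S" then show "h x \<in> T" using assms unfolding join_preserving_def by auto
next
  fix X assume X: "X \<subseteq> S" "finite X"
  then obtain x where x: "is_lub r S X x" using fj_parts(5)[OF assms(2)] by blast
  then have "join r S X \<in> S" using join_eq[OF assms(2) x] unfolding is_lub_def by simp
  moreover have "h ` X = f ` X" using X assms(3) by (force simp: image_def)
  ultimately show "h (join r S X) = join q T (h ` X)"
    using assms X unfolding join_preserving_def by metis
qed

lemma union_jsl:
  assumes "finite S" "\<forall>X\<subseteq>S. \<Union>X \<in> S"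
  shows "finite_jsl S (\<subseteq>)" "X \<subseteq> S \<Longrightarrow> join (\<subseteq>) S X = \<Union>X"
proof -
  have l: "X \<subseteq> S \<Longrightarrow> is_lub (\<subseteq>) S X (\<Union>X)" for X
    using assms unfolding is_lub_def by auto
  show J: "finite_jsl S (\<subseteq>)" unfolding finite_jsl_def
    using assms(1) l by (intro conjI ballI allI impI; blast)
  show "X \<subseteq> S \<Longrightarrow> join (\<subseteq>) S X = \<Union>X" using join_eq[OF J l] .
qed



definition UD :: "'a list set \<Rightarrow> 'a list set set" where
  "UD M = {Y. \<forall>w\<in>Y. \<exists>u. w \<in> lquot u M \<and> lquot u M \<subseteq> Y}"
definition Pp :: "'a list set \<Rightarrow> 'a list set \<Rightarrow> 'a list set" where
  "Pp L V = {u. \<forall>v\<in>V. u @ v \<notin> L}"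
definition Qq :: "'a list set \<Rightarrow> 'a list set \<Rightarrow> 'a list set" where
  "Qq L U = {x. \<forall>u\<in>U. u @ x \<notin> L}"

lemma rev_img_mem: "x \<in> rev ` A \<longleftrightarrow> rev x \<in> A"
  by (metis image_iff rev_rev_ident)

lemma lquot_rev: "w \<in> lquot v (rev ` L) \<longleftrightarrow> rev w @ rev v \<in> L"
  by (simp add: lquot_def rev_img_mem)

lemma states_LQ:
  assumes "finite {lquot u M | u. True}" shows "states (LQ M) = UD M"
proof
  show "states (LQ M) \<subseteq> UD M"
  proof
    fix Y assume "Y \<in> states (LQ M)"
    then obtain D where D: "Y = \<Union>D" "D \<subseteq> {lquot u M | u. True}" unfolding LQ_def by auto
    show "Y \<in> UD M" unfolding UD_def D(1) using D(2) by blast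
  qed
next
  show "UD M \<subseteq> states (LQ M)"
  proof
    fix Y assume Y: "Y \<in> UD M"
    let ?D = "{d \<in> {lquot u M | u. True}. d \<subseteq> Y}"
    have f: "finite ?D" by (rule finite_subset[OF _ assms]) blast
    have u: "\<Union>?D = Y"
    proof
      show "\<Union>?D \<subseteq> Y" by blast
      show "Y \<subseteq> \<Union>?D"
      proof
        fix w assume "w \<in> Y"
        then obtain u where "w \<in> lquot u M" "lquot u M \<subseteq> Y" using Y unfolding UD_def by blast
        then show "w \<in> \<Union>?D" by blast
      qed
    qed
    have "\<exists>D. Y = \<Union>D \<and> finite D \<and> D \<subseteq> {lquot u M | u. True}"
      using f u by (intro exI[of _ ?D]) blast
    then show "Y \<in> states (LQ M)" unfolding LQ_def by (simp only: jdfa.select_convs mem_Collect_eq)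
  qed
qed

lemma fin_LQ: "fin (LQ M) = {K \<in> states (LQ M). [] \<in> K}" by (simp add: LQ_def)

lemma UD_union: "X \<subseteq> UD M \<Longrightarrow> \<Union>X \<in> UD M" unfolding UD_def by blast

lemma finite_UD:
  assumes "finite {lquot u M | u. True}" shows "finite (UD M)"
proof -
  have "states (LQ M) \<subseteq> Union ` Pow {lquot u M | u. True}"
  proof
    fix Y assume "Y \<in> states (LQ M)"
    then obtain D where D: "Y = \<Union>D" "D \<subseteq> {lquot u M | u. True}" unfolding LQ_def by auto
    then show "Y \<in> Union ` Pow {lquot u M | u. True}" by blast
  qed
  moreover have "finite (Union ` Pow {lquot u M | u. True})" using assms by simp
  ultimately have "finite (states (LQ M))" using finite_subset by blast
  then show ?thesis using states_LQ[OF assms] by simp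
qed

lemma derivs_fin:
  assumes "regular L"
  shows "finite {lquot u L | u. True}" "finite {lquot u (rev ` L) | u. True}"
proof -
  obtain Q :: "nat set" and q0 \<delta> F where A: "finite Q" "q0 \<in> Q" "\<forall>a q. q \<in> Q \<longrightarrow> \<delta> a q \<in> Q"
    "F \<subseteq> Q" "L = {w. foldl (\<lambda>q a. \<delta> a q) q0 w \<in> F}"
    using assms unfolding regular_def by blast
  define d where "d = (\<lambda>q w. foldl (\<lambda>q a. \<delta> a q) q w)"
  have inQ: "q \<in> Q \<Longrightarrow> d q w \<in> Q" for q w
    unfolding d_def using A(3) by (induction w arbitrary: q) auto
  have dapp: "d q (u @ w) = d (d q u) w" for q u w unfolding d_def by simp
  have L: "L = {w. d q0 w \<in> F}" using A(5) unfolding d_def by simp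
  have "{lquot u L | u. True} \<subseteq> (\<lambda>q. {w. d q w \<in> F}) ` Q"
  proof
    fix x assume "x \<in> {lquot u L | u. True}"
    then obtain u where "x = lquot u L" by blast
    then have "x = (\<lambda>q. {w. d q w \<in> F}) (d q0 u)" unfolding L lquot_def by (simp add: dapp)
    then show "x \<in> (\<lambda>q. {w. d q w \<in> F}) ` Q" using inQ A(2) by blast
  qed
  then show "finite {lquot u L | u. True}" using A(1) finite_subset by blast
  have "{lquot u (rev ` L) | u. True} \<subseteq> (\<lambda>P. {w. d q0 (rev w) \<in> P}) ` Pow Q"
  proof
    fix x assume "x \<in> {lquot u (rev ` L) | u. True}"
    then obtain u where "x = lquot u (rev ` L)" by blast
    then have "x = (\<lambda>P. {w. d q0 (rev w) \<in> P}) {q \<in> Q. d q (rev u) \<in> F}"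
      using inQ A(2) by (auto simp: lquot_rev L dapp)
    then show "x \<in> (\<lambda>P. {w. d q0 (rev w) \<in> P}) ` Pow Q" by blast
  qed
  then show "finite {lquot u (rev ` L) | u. True}" using A(1) finite_subset by blast
qed

lemma lquot_set_Qq: "lquot_set U L = - Qq L U"
  unfolding lquot_set_def Qq_def lquot_def by auto

lemma dr_Qq: "dr L K = - Qq L (- (rev ` K))"
  unfolding dr_def lquot_set_Qq ..

lemma closure:
  assumes K: "K \<in> UD (rev ` L)"
  shows "Pp L (Qq L (- (rev ` K))) = - (rev ` K)"
proof (rule equalityI; rule subsetI)
  fix u assume u: "u \<in> Pp L (Qq L (- (rev ` K)))"
  show "u \<in> - rev ` K"
  proof
    assume "u \<in> rev ` K"
    then have "rev u \<in> K" by (simp add: rev_img_mem)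
    then obtain v where v: "rev u \<in> lquot v (rev ` L)" "lquot v (rev ` L) \<subseteq> K"
      using K unfolding UD_def by blast
    have "rev v \<in> Qq L (- (rev ` K))" unfolding Qq_def
    proof (intro CollectI ballI)
      fix u' assume u': "u' \<in> - rev ` K"
      show "u' @ rev v \<notin> L"
      proof
        assume "u' @ rev v \<in> L"
        then have "rev u' \<in> lquot v (rev ` L)" by (simp add: lquot_rev)
        then show False using v u' by (auto simp: rev_img_mem)
      qed
    qed
    moreover have "u @ rev v \<in> L" using v(1) by (simp add: lquot_rev)
    ultimately show False using u unfolding Pp_def by blast
  qed
next
  fix u assume "u \<in> - rev ` K"
  then show "u \<in> Pp L (Qq L (- (rev ` K)))" unfolding Pp_def Qq_def by blast
qed

lemma dr_in: "dr L K \<in> UD L"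
  unfolding dr_def lquot_set_def UD_def by blast

lemma dr_inj: "inj_on (dr L) (UD (rev ` L))"
proof (rule inj_onI)
  fix K1 K2 assume K: "K1 \<in> UD (rev ` L)" "K2 \<in> UD (rev ` L)" "dr L K1 = dr L K2"
  then have "Qq L (- (rev ` K1)) = Qq L (- (rev ` K2))" by (simp add: dr_Qq)
  then have "- (rev ` K1) = - (rev ` K2)" using closure[OF K(1)] closure[OF K(2)] by metis
  then have "rev ` K1 = rev ` K2" by simp
  then show "K1 = K2" by (simp add: inj_image_eq_iff inj_on_def)
qed

lemma dr_surj:
  assumes Y: "Y \<in> UD L" shows "rev ` (- Pp L (- Y)) \<in> UD (rev ` L)" "dr L (rev ` (- Pp L (- Y))) = Y"
proof -
  show "rev ` (- Pp L (- Y)) \<in> UD (rev ` L)" unfolding UD_def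
  proof (intro CollectI ballI)
    fix w assume "w \<in> rev ` (- Pp L (- Y))"
    then obtain v where v: "v \<notin> Y" "rev w @ v \<in> L" by (auto simp: rev_img_mem Pp_def)
    have "w \<in> lquot (rev v) (rev ` L)" using v by (simp add: lquot_rev)
    moreover have "lquot (rev v) (rev ` L) \<subseteq> rev ` (- Pp L (- Y))"
      using v by (auto simp: lquot_rev rev_img_mem Pp_def)
    ultimately show "\<exists>u. w \<in> lquot u (rev ` L) \<and> lquot u (rev ` L) \<subseteq> rev ` (- Pp L (- Y))" by blast
  qed
  have "rev ` rev ` A = A" for A :: "'a list set" by (simp add: image_image)
  then have "- (rev ` (rev ` (- Pp L (- Y)))) = Pp L (- Y)" by simp
  then have "dr L (rev ` (- Pp L (- Y))) = lquot_set (Pp L (- Y)) L" unfolding dr_def by simp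
  also have "\<dots> = Y" using Y unfolding lquot_set_def Pp_def UD_def lquot_def by blast
  finally show "dr L (rev ` (- Pp L (- Y))) = Y" .
qed

lemma dr_bij: "bij_betw (dr L) (UD (rev ` L)) (UD L)"
  unfolding bij_betw_def
proof
  show "inj_on (dr L) (UD (rev ` L))" by (rule dr_inj)
  show "dr L ` UD (rev ` L) = UD L"
  proof
    show "dr L ` UD (rev ` L) \<subseteq> UD L" using dr_in by blast
    show "UD L \<subseteq> dr L ` UD (rev ` L)"
    proof
      fix Y assume Y: "Y \<in> UD L"
      show "Y \<in> dr L ` UD (rev ` L)" using dr_surj[OF Y] by (metis image_eqI)
    qed
  qed
qed

lemma Qq_anti: "A \<subseteq> B \<Longrightarrow> Qq L B \<subseteq> Qq L A" unfolding Qq_def by blast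
lemma Pp_anti: "A \<subseteq> B \<Longrightarrow> Pp L B \<subseteq> Pp L A" unfolding Pp_def by blast

lemma dr_mono:
  assumes K: "K1 \<in> UD (rev ` L)" "K2 \<in> UD (rev ` L)"
  shows "K2 \<subseteq> K1 \<longleftrightarrow> dr L K1 \<subseteq> dr L K2"
proof -
  have "K2 \<subseteq> K1 \<longleftrightarrow> - (rev ` K1) \<subseteq> - (rev ` K2)" by (auto simp: rev_img_mem)
  also have "\<dots> \<longleftrightarrow> Qq L (- (rev ` K2)) \<subseteq> Qq L (- (rev ` K1))"
  proof
    assume "- (rev ` K1) \<subseteq> - (rev ` K2)"
    then show "Qq L (- (rev ` K2)) \<subseteq> Qq L (- (rev ` K1))" by (rule Qq_anti)
  next
    assume "Qq L (- (rev ` K2)) \<subseteq> Qq L (- (rev ` K1))"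
    then have "Pp L (Qq L (- (rev ` K1))) \<subseteq> Pp L (Qq L (- (rev ` K2)))" by (rule Pp_anti)
    then show "- (rev ` K1) \<subseteq> - (rev ` K2)" unfolding closure[OF K(1)] closure[OF K(2)] .
  qed
  also have "\<dots> \<longleftrightarrow> dr L K1 \<subseteq> dr L K2" by (simp add: dr_Qq)
  finally show ?thesis .
qed

lemma dr_trans:
  assumes t: "t \<in> UD (rev ` L)" and K: "K \<in> UD (rev ` L)"
  shows "lquot [a] t \<subseteq> K \<longleftrightarrow> lquot [a] (dr L K) \<subseteq> dr L t"
proof -
  let ?Nt = "- (rev ` t)" and ?NK = "- (rev ` K)"
  have "lquot [a] t \<subseteq> K \<longleftrightarrow> (\<forall>u. u \<in> ?NK \<longrightarrow> u @ [a] \<in> ?Nt)"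
    unfolding lquot_def by (auto simp: rev_img_mem) (metis rev_rev_ident)
  also have "\<dots> \<longleftrightarrow> (\<forall>u. u \<in> ?NK \<longrightarrow> u @ [a] \<in> Pp L (Qq L ?Nt))" using closure[OF t] by simp
  also have "\<dots> \<longleftrightarrow> (\<forall>x \<in> Qq L ?Nt. \<forall>u \<in> ?NK. u @ a # x \<notin> L)" unfolding Pp_def by auto
  also have "\<dots> \<longleftrightarrow> lquot [a] (dr L K) \<subseteq> dr L t" unfolding dr_Qq lquot_def Qq_def by auto
  finally show ?thesis .
qed

lemma dr_init:
  assumes t: "t \<in> UD (rev ` L)"
  shows "[] \<notin> t \<longleftrightarrow> L \<subseteq> dr L t"
proof -
  have "[] \<notin> t \<longleftrightarrow> [] \<in> - (rev ` t)" by (simp add: rev_img_mem)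
  also have "\<dots> \<longleftrightarrow> [] \<in> Pp L (Qq L (- (rev ` t)))" using closure[OF t] by simp
  also have "\<dots> \<longleftrightarrow> L \<subseteq> dr L t" unfolding dr_Qq Pp_def by auto
  finally show ?thesis .
qed

lemma dr_fin: "[] \<in> dr L K \<longleftrightarrow> \<not> rev ` L \<subseteq> K"
  unfolding dr_Qq Qq_def by (auto simp: rev_img_mem)

lemma lquot_UD: assumes "Y \<in> UD M" shows "lquot [a] Y \<in> UD M"
  unfolding UD_def
proof (intro CollectI ballI)
  have Y: "\<forall>w\<in>Y. \<exists>u. w \<in> lquot u M \<and> lquot u M \<subseteq> Y" using assms unfolding UD_def by blast
  fix w assume w: "w \<in> lquot [a] Y"
  from w Y
  obtain u where "a # w \<in> lquot u M" "lquot u M \<subseteq> Y" unfolding lquot_def by auto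
  then show "\<exists>u. w \<in> lquot u M \<and> lquot u M \<subseteq> lquot [a] Y"
    by (intro exI[of _ "u @ [a]"]) (auto simp: lquot_def)
qed

lemma self_UD: "M \<in> UD M"
  unfolding UD_def by (intro CollectI ballI exI[of _ "[]"]) (auto simp: lquot_def)



theorem proposition3p9:
  fixes L :: "('a :: finite) list set"
  assumes "regular L"
  shows "jsl_dfa (dual (LQ (rev ` L))) \<and> jsl_dfa (LQ L) \<and>
         jsl_dfa_iso (dual (LQ (rev ` L))) (LQ L) (dr L)"
proof -
  note fL = derivs_fin(1)[OF assms] and fR = derivs_fin(2)[OF assms]
  have SL: "states (LQ L) = UD L" by (rule states_LQ[OF fL])
  have SR: "states (LQ (rev ` L)) = UD (rev ` L)" by (rule states_LQ[OF fR])
  define D where "D = dual (LQ (rev ` L))"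
  have stD: "states D = UD (rev ` L)" unfolding D_def dual_def using SR by simp
  have leD: "le D = (\<lambda>x y. y \<subseteq> x)" unfolding D_def dual_def LQ_def by simp
  have finD: "fin D = {s \<in> UD (rev ` L). \<not> rev ` L \<subseteq> s}" unfolding D_def dual_def using SR
    by (simp add: LQ_def)
  have trD: "trans D a s = (THE t. t \<in> UD (rev ` L) \<and> lquot [a] t \<subseteq> s \<and>
      (\<forall>t'\<in>UD (rev ` L). lquot [a] t' \<subseteq> s \<longrightarrow> t' \<subseteq> t))" for a s
    unfolding D_def dual_def using SR by (simp add: LQ_def)
  have initD: "init D = (THE s. s \<in> UD (rev ` L) \<and> [] \<notin> s \<and>
      (\<forall>t\<in>UD (rev ` L). [] \<notin> t \<longrightarrow> t \<subseteq> s))"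
  proof -
    have "init D = (THE s. s \<in> UD (rev ` L) \<and> s \<notin> fin (LQ (rev ` L)) \<and>
      (\<forall>t\<in>UD (rev ` L). t \<notin> fin (LQ (rev ` L)) \<longrightarrow> t \<subseteq> s))"
      unfolding D_def dual_def using SR by (simp add: LQ_def)
    also have "\<dots> = (THE s. s \<in> UD (rev ` L) \<and> [] \<notin> s \<and>
      (\<forall>t\<in>UD (rev ` L). [] \<notin> t \<longrightarrow> t \<subseteq> s))"
      unfolding fin_LQ SR by (rule arg_cong[where f = The]) auto
    finally show ?thesis .
  qed
  have trL: "trans (LQ L) a = lquot [a]" for a by (simp add: LQ_def)
  have finL: "fin (LQ L) = {K \<in> UD L. [] \<in> K}" by (simp only: fin_LQ SL)
  have initL: "init (LQ L) = L" by (simp add: LQ_def)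
  have leL: "le (LQ L) = (\<subseteq>)" by (simp add: LQ_def)

  have bij: "bij_betw (dr L) (UD (rev ` L)) (UD L)" by (rule dr_bij)
  have iso: "\<forall>x\<in>UD (rev ` L). \<forall>y\<in>UD (rev ` L). (y \<subseteq> x) \<longleftrightarrow> dr L x \<subseteq> dr L y"
    using dr_mono by blast
  have jslL: "finite_jsl (UD L) (\<subseteq>)"
    using union_jsl(1)[OF finite_UD[OF fL]] UD_union by blast
  have joinL: "X \<subseteq> UD L \<Longrightarrow> join (\<subseteq>) (UD L) X = \<Union>X" for X
    using union_jsl(2)[OF finite_UD[OF fL]] UD_union by blast
  have jslD: "finite_jsl (UD (rev ` L)) (\<lambda>x y. y \<subseteq> x)"
    by (rule transport(1)[OF bij iso jslL])
  have jpdr: "join_preserving (UD (rev ` L)) (\<lambda>x y. y \<subseteq> x) (UD L) (\<subseteq>) (dr L)"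
    by (rule transport(2)[OF bij iso jslL])
  define g where "g = the_inv_into (UD (rev ` L)) (dr L)"
  have bijg: "bij_betw g (UD L) (UD (rev ` L))"
    and isog: "\<forall>x\<in>UD L. \<forall>y\<in>UD L. x \<subseteq> y \<longleftrightarrow> g y \<subseteq> g x"
    using inv_iso[OF bij iso] unfolding g_def by simp_all
  have jpg: "join_preserving (UD L) (\<subseteq>) (UD (rev ` L)) (\<lambda>x y. y \<subseteq> x) g"
    by (rule transport(2)[OF bijg isog jslD])
  have gY: "g Y \<in> UD (rev ` L) \<and> dr L (g Y) = Y" if Y: "Y \<in> UD L" for Y
  proof
    show "g Y \<in> UD (rev ` L)" using bij_betwE[OF bijg] Y by blast
    show "dr L (g Y) = Y" unfolding g_def by (rule f_the_inv_into_f_bij_betw[OF bij Y])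
  qed
  have gK: "K \<in> UD (rev ` L) \<Longrightarrow> g (dr L K) = K" for K
    unfolding g_def by (rule the_inv_into_f_f[OF bij_betw_imp_inj_on[OF bij]])
  have trans_eq: "trans D a K = g (lquot [a] (dr L K))" if K: "K \<in> UD (rev ` L)" for a K
  proof -
    let ?T = "g (lquot [a] (dr L K))"
    have Y: "lquot [a] (dr L K) \<in> UD L" by (rule lquot_UD[OF dr_in])
    have T1: "?T \<in> UD (rev ` L)" and T2: "dr L ?T = lquot [a] (dr L K)" using gY[OF Y] by (rule conjunct1, rule conjunct2)
    have P1: "lquot [a] ?T \<subseteq> K" using dr_trans[OF T1 K] T2 by (simp only: subset_refl)
    have P2: "t' \<subseteq> ?T" if t': "t' \<in> UD (rev ` L)" "lquot [a] t' \<subseteq> K" for t'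
    proof -
      have "lquot [a] (dr L K) \<subseteq> dr L t'" using dr_trans[OF t'(1) K] t'(2) by (simp only:)
      then have "dr L ?T \<subseteq> dr L t'" using T2 by (simp only:)
      then show "t' \<subseteq> ?T" using dr_mono[OF T1 t'(1)] by (simp only:)
    qed
    show ?thesis unfolding trD
    proof (rule the_equality)
      show "?T \<in> UD (rev ` L) \<and> lquot [a] ?T \<subseteq> K \<and>
        (\<forall>t'\<in>UD (rev ` L). lquot [a] t' \<subseteq> K \<longrightarrow> t' \<subseteq> ?T)" using T1 P1 P2 by blast
      fix t assume H: "t \<in> UD (rev ` L) \<and> lquot [a] t \<subseteq> K \<and>
        (\<forall>t'\<in>UD (rev ` L). lquot [a] t' \<subseteq> K \<longrightarrow> t' \<subseteq> t)"
      then have "?T \<subseteq> t" using T1 P1 by blast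
      moreover have "t \<subseteq> ?T" using H P2 by blast
      ultimately show "t = ?T" by (rule subset_antisym[rotated])
    qed
  qed
  have init_eq: "init D = g L"
  proof -
    have Y: "L \<in> UD L" by (rule self_UD)
    have T1: "g L \<in> UD (rev ` L)" and T2: "dr L (g L) = L" using gY[OF Y] by (rule conjunct1, rule conjunct2)
    have P1: "[] \<notin> g L" using dr_init[OF T1] T2 by (simp only: subset_refl)
    have P2: "t \<subseteq> g L" if t: "t \<in> UD (rev ` L)" "[] \<notin> t" for t
    proof -
      have "L \<subseteq> dr L t" using dr_init[OF t(1)] t(2) by (rule iffD1)
      then have "dr L (g L) \<subseteq> dr L t" using T2 by (simp only:)
      then show "t \<subseteq> g L" using dr_mono[OF T1 t(1)] by (simp only:)
    qed
    show ?thesis unfolding initD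
    proof (rule the_equality)
      show "g L \<in> UD (rev ` L) \<and> [] \<notin> g L \<and> (\<forall>t\<in>UD (rev ` L). [] \<notin> t \<longrightarrow> t \<subseteq> g L)"
        using T1 P1 P2 by blast
      fix s assume H: "s \<in> UD (rev ` L) \<and> [] \<notin> s \<and> (\<forall>t\<in>UD (rev ` L). [] \<notin> t \<longrightarrow> t \<subseteq> s)"
      then have "g L \<subseteq> s" using T1 P1 by blast
      moreover have "s \<subseteq> g L" using H P2 by blast
      ultimately show "s = g L" by (rule subset_antisym[rotated])
    qed
  qed
  have dr_tr: "K \<in> UD (rev ` L) \<Longrightarrow> dr L (trans D a K) = lquot [a] (dr L K)" for a K
    using trans_eq gY lquot_UD dr_in by metis
  have jpl: "join_preserving (UD L) (\<subseteq>) (UD L) (\<subseteq>) (lquot [a])" for a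
    unfolding join_preserving_def
  proof (intro conjI ballI allI impI)
    fix Y assume "Y \<in> UD L" then show "lquot [a] Y \<in> UD L" by (rule lquot_UD)
  next
    fix X assume X: "X \<subseteq> UD L" "finite X"
    have "lquot [a] ` X \<subseteq> UD L"
    proof
      fix y assume "y \<in> lquot [a] ` X"
      then obtain Y where "Y \<in> X" "y = lquot [a] Y" by blast
      then show "y \<in> UD L" using lquot_UD[OF subsetD[OF X(1)]] by simp
    qed
    then have j2: "join (\<subseteq>) (UD L) (lquot [a] ` X) = \<Union>(lquot [a] ` X)" by (rule joinL)
    have j1: "join (\<subseteq>) (UD L) X = \<Union>X" using X(1) by (rule joinL)
    have "lquot [a] (\<Union>X) = \<Union>(lquot [a] ` X)" unfolding lquot_def by blast
    then show "lquot [a] (join (\<subseteq>) (UD L) X) = join (\<subseteq>) (UD L) (lquot [a] ` X)"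
      unfolding j1 j2 .
  qed
  have jpD: "join_preserving (UD (rev ` L)) (\<lambda>x y. y \<subseteq> x) (UD (rev ` L)) (\<lambda>x y. y \<subseteq> x) (trans D a)" for a
  proof (rule jp_cong[OF _ jslD])
    show "join_preserving (UD (rev ` L)) (\<lambda>x y. y \<subseteq> x) (UD (rev ` L)) (\<lambda>x y. y \<subseteq> x) (g \<circ> (lquot [a] \<circ> dr L))"
      by (rule jp_comp[OF jp_comp[OF jpdr jpl] jpg])
    show "\<forall>x\<in>UD (rev ` L). (g \<circ> (lquot [a] \<circ> dr L)) x = trans D a x" using trans_eq by (simp only: comp_apply) (intro ballI; rule sym; rule trans_eq)
  qed
  have RU: "rev ` L \<in> UD (rev ` L)" by (rule self_UD)
  have A1: "jsl_dfa D" unfolding jsl_dfa_def stD leD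
  proof (intro conjI allI)
    show "finite_jsl (UD (rev ` L)) (\<lambda>x y. y \<subseteq> x)" by (rule jslD)
    show "join_preserving (UD (rev ` L)) (\<lambda>x y. y \<subseteq> x) (UD (rev ` L)) (\<lambda>x y. y \<subseteq> x) (trans D a)" for a
      by (rule jpD)
    show "init D \<in> UD (rev ` L)" unfolding init_eq using gY[OF self_UD] by (rule conjunct1)
    show "\<exists>sf\<in>UD (rev ` L). fin D = {s \<in> UD (rev ` L). \<not> sf \<subseteq> s}" using finD RU by blast
  qed
  have A2: "jsl_dfa (LQ L)" unfolding jsl_dfa_def SL leL trL initL finL
  proof (intro conjI allI)
    show "finite_jsl (UD L) (\<subseteq>)" by (rule jslL)
    show "join_preserving (UD L) (\<subseteq>) (UD L) (\<subseteq>) (lquot [a])" for a by (rule jpl)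
    show "L \<in> UD L" by (rule self_UD)
    let ?sf = "\<Union>{Y \<in> UD L. [] \<notin> Y}"
    have "?sf \<in> UD L" using UD_union[of "{Y \<in> UD L. [] \<notin> Y}" L] by blast
    moreover have "{K \<in> UD L. [] \<in> K} = {s \<in> UD L. \<not> s \<subseteq> ?sf}" by blast
    ultimately show "\<exists>sf\<in>UD L. {K \<in> UD L. [] \<in> K} = {s \<in> UD L. \<not> s \<subseteq> sf}" by blast
  qed
  have M1: "jsl_dfa_morphism D (LQ L) (dr L)" unfolding jsl_dfa_morphism_def stD leD SL leL trL initL finL
  proof (intro conjI allI ballI)
    show "join_preserving (UD (rev ` L)) (\<lambda>x y. y \<subseteq> x) (UD L) (\<subseteq>) (dr L)" by (rule jpdr)
    show "dr L (trans D a s) = lquot [a] (dr L s)" if "s \<in> UD (rev ` L)" for a s using dr_tr that .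
    show "dr L (init D) = L" unfolding init_eq using gY[OF self_UD] by (rule conjunct2)
    show "(dr L s \<in> {K \<in> UD L. [] \<in> K}) = (s \<in> fin D)" if "s \<in> UD (rev ` L)" for s
    proof -
      have "dr L s \<in> UD L" by (rule dr_in)
      then show ?thesis using that dr_fin[of L s] unfolding finD by blast
    qed
  qed
  have M2: "jsl_dfa_morphism (LQ L) D g" unfolding jsl_dfa_morphism_def stD leD SL leL trL initL finL
  proof (intro conjI allI ballI)
    show "join_preserving (UD L) (\<subseteq>) (UD (rev ` L)) (\<lambda>x y. y \<subseteq> x) g" by (rule jpg)
    show "g (lquot [a] s) = trans D a (g s)" if "s \<in> UD L" for a s
    proof -
      have "trans D a (g s) = g (lquot [a] (dr L (g s)))" using trans_eq gY[OF that] by blast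
      then show ?thesis using gY[OF that] by simp
    qed
    show "g L = init D" using init_eq by simp
    show "(g s \<in> fin D) = (s \<in> {K \<in> UD L. [] \<in> K})" if "s \<in> UD L" for s
    proof -
      have h: "g s \<in> UD (rev ` L)" "dr L (g s) = s" using gY[OF that] by auto
      show ?thesis using that h dr_fin[of L "g s"] unfolding finD by auto
    qed
  qed
  have "jsl_dfa_iso D (LQ L) (dr L)" unfolding jsl_dfa_iso_def
    using M1 M2 bij stD SL unfolding g_def by simp
  then show ?thesis using A1 A2 unfolding D_def by blast
qed

end
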